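(* Let $\rho$ be a density matrix and $\epsilon>0$. Consider the following process: a set of states $S$ is initially empty; for each query unit vector $|\psi\rangle$, let $|\psi_S\rangle$ be the orthogonal projection of $|\psi\rangle$ onto $\mathrm{span}(S)$; an oracle produces an estimate $\hat o$ with $|\langle\psi_S|\rho|\psi_S\rangle-\hat o|<\frac38\epsilon$; a mistake may be declared only if $|\langle\psi|\rho|\psi\rangle-\hat o|\ge\frac34\epsilon$, and whenever a mistake is declared, $|\psi\rangle$ is added to $S$. Then the total number of mistakes is at most $\frac{256}{9}\cdot\frac1{\epsilon^2}$.
   Context: Queries $|\psi\rangle$ may be chosen arbitrarily (adaptively); $\rho$ is positive semidefinite with unit trace. *)

theory Defs
  imports "HOL-Analysis.Analysis"
begin

definition braket :: "complex^'n \<Rightarrow> complex^'n \<Rightarrow> complex" where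
  "braket u v = (\<Sum>i\<in>UNIV. cnj (u $ i) * v $ i)"

definition unit_vec :: "complex^'n \<Rightarrow> bool" where
  "unit_vec v \<longleftrightarrow> braket v v = 1"

definition density_matrix :: "complex^'n^'n \<Rightarrow> bool" where
  "density_matrix \<rho> \<longleftrightarrow>
     (\<forall>i j. \<rho> $ i $ j = cnj (\<rho> $ j $ i)) \<and>
     (\<forall>v. Im (braket v (\<rho> *v v)) = 0 \<and> Re (braket v (\<rho> *v v)) \<ge> 0) \<and>
     trace \<rho> = 1"

text \<open>Expectation value <psi|rho|psi> (real since rho is Hermitian).\<close>
definition expect :: "complex^'n^'n \<Rightarrow> complex^'n \<Rightarrow> real" where
  "expect \<rho> \<psi> = Re (braket \<psi> (\<rho> *v \<psi>))"

definition oproj :: "(complex^'n) set \<Rightarrow> complex^'n \<Rightarrow> complex^'n" where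
  "oproj S \<psi> = (THE p. p \<in> vec.span S \<and> (\<forall>s\<in>vec.span S. braket s (\<psi> - p) = 0))"

end

theory Submission
  imports Defs
begin


lemma braket_add_right: "braket u (v + w) = braket u v + braket u w"
  by (simp add: braket_def algebra_simps sum.distrib)
lemma braket_add_left: "braket (u + v) w = braket u w + braket v w"
  by (simp add: braket_def algebra_simps sum.distrib)
lemma braket_diff_right: "braket u (v - w) = braket u v - braket u w"
  by (simp add: braket_def algebra_simps sum_subtractf)
lemma braket_diff_left: "braket (u - v) w = braket u w - braket v w"
  by (simp add: braket_def algebra_simps sum_subtractf)
lemma braket_scale_right: "braket u (c *s v) = c * braket u v"
  by (simp add: braket_def sum_distrib_left algebra_simps)
lemma braket_scale_left: "braket (c *s u) v = cnj c * braket u v"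
  by (simp add: braket_def sum_distrib_left algebra_simps)
lemma braket_cnj: "cnj (braket u v) = braket v u"
  by (simp add: braket_def mult.commute)
lemma braket_zero_right[simp]: "braket u 0 = 0" by (simp add: braket_def)
lemma braket_zero_left[simp]: "braket 0 u = 0" by (simp add: braket_def)
lemma braket_sum_right: "braket u (\<Sum>i\<in>I. f i) = (\<Sum>i\<in>I. braket u (f i))"
  by (induct I rule: infinite_finite_induct) (auto simp: braket_add_right)
lemma braket_sum_left: "braket (\<Sum>i\<in>I. f i) u = (\<Sum>i\<in>I. braket (f i) u)"
  by (induct I rule: infinite_finite_induct) (auto simp: braket_add_left)
lemma Re_braket: "Re (braket u v) = inner u v"
  by (simp add: braket_def inner_vec_def inner_complex_def)
lemma Im_braket_self: "Im (braket u u) = 0"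
  by (simp add: braket_def algebra_simps)
lemma braket_self: "braket u u = of_real ((norm u)^2)"
  by (simp add: complex_eq_iff Im_braket_self Re_braket power2_norm_eq_inner)
lemma braket_self_zero: "braket u u = 0 \<longleftrightarrow> u = 0"
  by (simp add: braket_self)

lemma braket_axis_right: "braket u (axis m 1) = cnj (u $ m)"
  by (simp add: braket_def axis_def if_distrib cong: if_cong)

lemma span_subspace: "subspace (vec.span (S :: (complex^'n) set))"
  unfolding subspace_def
proof (intro conjI ballI allI)
  show "0 \<in> vec.span S" by (rule vec.span_zero)
  fix x y assume "x \<in> vec.span S" "y \<in> vec.span S"
  then show "x + y \<in> vec.span S" by (rule vec.span_add)
next
  fix c :: real and x assume "x \<in> vec.span S"
  then have "complex_of_real c *s x \<in> vec.span S" by (rule vec.span_scale)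
  moreover have "complex_of_real c *s x = c *\<^sub>R x"
    by (auto simp: vec_eq_iff complex_eq_iff)
  ultimately show "c *\<^sub>R x \<in> vec.span S" by simp
qed

lemma oproj_exists:
  fixes S :: "(complex^'n) set"
  shows "\<exists>p. p \<in> vec.span S \<and> (\<forall>s\<in>vec.span S. braket s (\<psi> - p) = 0)"
proof -
  obtain y z where y: "y \<in> span (vec.span S)" and z: "\<And>w. w \<in> span (vec.span S) \<Longrightarrow> orthogonal z w"
    and e: "\<psi> = y + z"
    using orthogonal_subspace_decomp_exists by blast
  have sp: "span (vec.span S) = vec.span S" using span_subspace span_eq_iff by blast
  show ?thesis
  proof (intro exI conjI ballI)
    show "y \<in> vec.span S" using y sp by simp
    fix s assume s: "s \<in> vec.span S"
    have "\<psi> - y = z" using e by simp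
    have r: "Re (braket w z) = 0" if "w \<in> vec.span S" for w
      using z[of w] that sp by (simp add: Re_braket orthogonal_def inner_commute)
    have "\<i> *s s \<in> vec.span S" using s by (rule vec.span_scale)
    from r[OF this] have "Im (braket s z) = 0" by (simp add: braket_scale_left)
    with r[OF s] show "braket s (\<psi> - y) = 0" using \<open>\<psi> - y = z\<close> by (simp add: complex_eq_iff)
  qed
qed

lemma oproj_props:
  fixes S :: "(complex^'n) set"
  shows "oproj S \<psi> \<in> vec.span S \<and> (\<forall>s\<in>vec.span S. braket s (\<psi> - oproj S \<psi>) = 0)"
proof -
  have "\<exists>!p. p \<in> vec.span S \<and> (\<forall>s\<in>vec.span S. braket s (\<psi> - p) = 0)"
  proof (rule ex_ex1I)
    show "\<exists>p. p \<in> vec.span S \<and> (\<forall>s\<in>vec.span S. braket s (\<psi> - p) = 0)" by (rule oproj_exists)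
  next
    fix p q assume p: "p \<in> vec.span S \<and> (\<forall>s\<in>vec.span S. braket s (\<psi> - p) = 0)"
      and q: "q \<in> vec.span S \<and> (\<forall>s\<in>vec.span S. braket s (\<psi> - q) = 0)"
    have d: "q - p \<in> vec.span S" using p q vec.span_diff by blast
    have "braket (q - p) (\<psi> - p) - braket (q - p) (\<psi> - q) = 0" using p q d by simp
    then have "braket (q - p) (q - p) = 0" by (simp add: braket_diff_right algebra_simps)
    then show "p = q" by (simp add: braket_self_zero)
  qed
  then show ?thesis unfolding oproj_def by (rule theI')
qed

lemma orthonormal_bound:
  fixes \<rho> :: "complex^'n^'n" and u :: "nat \<Rightarrow> complex^'n"
  assumes psd: "\<forall>v. Re (braket v (\<rho> *v v)) \<ge> 0"
    and fin: "finite I"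
    and orth: "\<And>i j. i \<in> I \<Longrightarrow> j \<in> I \<Longrightarrow> braket (u i) (u j) = (if i = j then 1 else 0)"
  shows "(\<Sum>i\<in>I. Re (braket (u i) (\<rho> *v u i))) \<le> Re (trace \<rho>)"
proof -
  define Q where "Q k m = (\<Sum>i\<in>I. u i $ k * cnj (u i $ m))" for k m
  define r where "r m = axis m 1 - (\<Sum>i\<in>I. cnj (u i $ m) *s u i)" for m
  have r_comp: "r m $ k = (if m = k then 1 else 0) - Q k m" for m k
    by (simp add: r_def Q_def axis_def sum_component mult.commute)
  have Qc: "cnj (Q k m) = Q m k" for k m
    by (simp add: Q_def mult.commute)
  have QQ: "(\<Sum>m\<in>UNIV. Q m k * Q l m) = Q l k" for k l
  proof -
    have "(\<Sum>m\<in>UNIV. Q m k * Q l m)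
        = (\<Sum>m\<in>UNIV. \<Sum>j\<in>I. \<Sum>i\<in>I. cnj (u i $ k) * u j $ l * (cnj (u j $ m) * u i $ m))"
      by (simp add: Q_def sum_distrib_left sum_distrib_right algebra_simps)
    also have "\<dots> = (\<Sum>j\<in>I. \<Sum>i\<in>I. cnj (u i $ k) * u j $ l * (\<Sum>m\<in>UNIV. cnj (u j $ m) * u i $ m))"
      by (simp add: sum_distrib_left sum.swap[of _ UNIV])
    also have "\<dots> = (\<Sum>i\<in>I. \<Sum>j\<in>I. cnj (u i $ k) * u j $ l * (\<Sum>m\<in>UNIV. cnj (u j $ m) * u i $ m))"
      by (rule sum.swap)
    also have "\<dots> = (\<Sum>i\<in>I. \<Sum>j\<in>I. cnj (u i $ k) * u j $ l * (if j = i then 1 else 0))"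
      using orth by (intro sum.cong refl) (simp add: braket_def[symmetric])
    also have "\<dots> = Q l k"
      using fin by (simp add: Q_def mult.commute if_distrib cong: if_cong)
    finally show ?thesis .
  qed
  have rr: "(\<Sum>m\<in>UNIV. cnj (r m $ k) * r m $ l) = (if k = l then 1 else 0) - Q l k" for k l
  proof -
    have "(\<Sum>m\<in>UNIV. cnj (r m $ k) * r m $ l)
       = (\<Sum>m\<in>UNIV. ((if m = k then 1 else 0) - Q m k) * ((if m = l then 1 else 0) - Q l m))"
      by (intro sum.cong refl) (auto simp: r_comp Qc)
    also have "\<dots> = (\<Sum>m\<in>UNIV. (if k = l then (if m = k then 1 else 0) else 0))
        - (\<Sum>m\<in>UNIV. (if m = k then Q l m else 0)) - (\<Sum>m\<in>UNIV. (if m = l then Q m k else 0))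
        + (\<Sum>m\<in>UNIV. Q m k * Q l m)"
    proof -
      have "((if m = k then 1 else 0) - Q m k) * ((if m = l then 1 else 0) - Q l m)
          = (if k = l then (if m = k then 1 else 0) else 0) - (if m = k then Q l m else 0)
            - (if m = l then Q m k else 0) + Q m k * Q l m" for m :: 'n
        by (auto simp: algebra_simps)
      then show ?thesis by (simp add: sum.distrib sum_subtractf)
    qed
    also have "\<dots> = (if k = l then 1 else 0) - Q l k"
      using QQ[of k l] by (simp add: sum.delta)
    finally show ?thesis .
  qed
  have Br: "braket (r m) (\<rho> *v r m) = (\<Sum>k\<in>UNIV. \<Sum>l\<in>UNIV. \<rho>$k$l * (cnj (r m $ k) * r m $ l))" for m
    by (simp add: braket_def matrix_vector_mult_def sum_distrib_left mult.left_commute)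
  have "(\<Sum>m\<in>UNIV. braket (r m) (\<rho> *v r m)) = (\<Sum>m\<in>UNIV. \<Sum>k\<in>UNIV. \<Sum>l\<in>UNIV. \<rho>$k$l * (cnj (r m $ k) * r m $ l))"
    unfolding Br ..
  also have "\<dots> = (\<Sum>k\<in>UNIV. \<Sum>m\<in>UNIV. \<Sum>l\<in>UNIV. \<rho>$k$l * (cnj (r m $ k) * r m $ l))"
    by (rule sum.swap)
  also have "\<dots> = (\<Sum>k\<in>UNIV. \<Sum>l\<in>UNIV. \<Sum>m\<in>UNIV. \<rho>$k$l * (cnj (r m $ k) * r m $ l))"
    by (rule sum.cong[OF refl], rule sum.swap)
  also have "\<dots> = (\<Sum>k\<in>UNIV. \<Sum>l\<in>UNIV. \<rho>$k$l * (\<Sum>m\<in>UNIV. cnj (r m $ k) * r m $ l))"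
    by (simp add: sum_distrib_left)
  also have "\<dots> = (\<Sum>k\<in>UNIV. \<Sum>l\<in>UNIV. \<rho>$k$l * ((if k = l then 1 else 0) - Q l k))"
    by (simp only: rr)
  also have "\<dots> = (\<Sum>k\<in>UNIV. \<rho>$k$k - (\<Sum>l\<in>UNIV. \<rho>$k$l * Q l k))"
  proof (rule sum.cong[OF refl])
    fix k
    have "(\<Sum>l\<in>UNIV. \<rho>$k$l * ((if k = l then 1 else 0) - Q l k))
        = (\<Sum>l\<in>UNIV. (if l = k then \<rho>$k$l else 0)) - (\<Sum>l\<in>UNIV. \<rho>$k$l * Q l k)"
      unfolding sum_subtractf[symmetric] by (rule sum.cong) (auto simp: right_diff_distrib)
    then show "(\<Sum>l\<in>UNIV. \<rho>$k$l * ((if k = l then 1 else 0) - Q l k)) = \<rho>$k$k - (\<Sum>l\<in>UNIV. \<rho>$k$l * Q l k)"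
      by simp
  qed
  also have "\<dots> = trace \<rho> - (\<Sum>k\<in>UNIV. \<Sum>l\<in>UNIV. \<rho>$k$l * Q l k)"
    by (simp add: sum_subtractf trace_def)
  also have "(\<Sum>k\<in>UNIV. \<Sum>l\<in>UNIV. \<rho>$k$l * Q l k) = (\<Sum>k\<in>UNIV. \<Sum>l\<in>UNIV. \<Sum>i\<in>I. cnj (u i $ k) * (\<rho>$k$l * u i $ l))"
    by (simp add: Q_def sum_distrib_left mult_ac)
  also have "\<dots> = (\<Sum>k\<in>UNIV. \<Sum>i\<in>I. \<Sum>l\<in>UNIV. cnj (u i $ k) * (\<rho>$k$l * u i $ l))"
    by (rule sum.cong[OF refl], rule sum.swap)
  also have "\<dots> = (\<Sum>i\<in>I. \<Sum>k\<in>UNIV. \<Sum>l\<in>UNIV. cnj (u i $ k) * (\<rho>$k$l * u i $ l))"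
    by (rule sum.swap)
  also have "\<dots> = (\<Sum>i\<in>I. braket (u i) (\<rho> *v u i))"
    by (simp add: braket_def matrix_vector_mult_def sum_distrib_left)
  finally have eq: "(\<Sum>m\<in>UNIV. braket (r m) (\<rho> *v r m)) = trace \<rho> - (\<Sum>i\<in>I. braket (u i) (\<rho> *v u i))" .
  have "0 \<le> (\<Sum>m\<in>UNIV. Re (braket (r m) (\<rho> *v r m)))"
    using psd by (intro sum_nonneg) auto
  also have "\<dots> = Re (trace \<rho>) - (\<Sum>i\<in>I. Re (braket (u i) (\<rho> *v u i)))"
    using arg_cong[OF eq, of Re] by simp
  finally show ?thesis by simp
qed



lemma mv_scale: "(\<rho>::complex^'n^'n) *v (c *s v) = c *s (\<rho> *v v)"
  by (simp add: vec_eq_iff matrix_vector_mult_def sum_distrib_left mult_ac)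

lemma herm_sym:
  assumes herm: "\<forall>i j. (\<rho>::complex^'n^'n) $ i $ j = cnj (\<rho> $ j $ i)"
  shows "braket v (\<rho> *v w) = cnj (braket w (\<rho> *v v))"
proof -
  have h: "cnj (\<rho>$i$j) = \<rho>$j$i" for i j using herm by (metis complex_cnj_cnj)
  have "cnj (braket w (\<rho> *v v)) = (\<Sum>k\<in>UNIV. \<Sum>l\<in>UNIV. w$k * (\<rho>$l$k * cnj (v$l)))"
    using h by (simp add: braket_def matrix_vector_mult_def sum_distrib_left)
  also have "\<dots> = (\<Sum>l\<in>UNIV. \<Sum>k\<in>UNIV. w$k * (\<rho>$l$k * cnj (v$l)))"
    by (rule sum.swap)
  also have "\<dots> = braket v (\<rho> *v w)"
    by (simp add: braket_def matrix_vector_mult_def sum_distrib_left mult_ac)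
  finally show ?thesis by simp
qed

lemma B_expand:
  fixes \<rho> :: "complex^'n^'n"
  shows "braket (v - d *s w) (\<rho> *v (v - d *s w)) =
    braket v (\<rho> *v v) - d * braket v (\<rho> *v w) - cnj d * braket w (\<rho> *v v) + cnj d * d * braket w (\<rho> *v w)"
  by (simp add: matrix_vector_mult_diff_distrib mv_scale braket_diff_left braket_diff_right
      braket_scale_left braket_scale_right algebra_simps)

lemma B_add:
  fixes \<rho> :: "complex^'n^'n"
  shows "braket (v + w) (\<rho> *v (v + w)) =
    braket v (\<rho> *v v) + braket v (\<rho> *v w) + braket w (\<rho> *v v) + braket w (\<rho> *v w)"
  by (simp add: matrix_vector_right_distrib braket_add_left braket_add_right algebra_simps)

lemma expect_scale:
  fixes \<rho> :: "complex^'n^'n"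
  shows "expect \<rho> (complex_of_real r *s v) = r^2 * expect \<rho> v"
  by (simp add: expect_def mv_scale braket_scale_left braket_scale_right power2_eq_square)

lemma real_B:
  assumes "\<forall>v. Im (braket v (\<rho> *v v)) = 0"
  shows "braket v (\<rho> *v v) = complex_of_real (expect \<rho> v)"
  using assms by (simp add: expect_def complex_eq_iff)

lemma CS:
  fixes \<rho> :: "complex^'n^'n"
  assumes herm: "\<forall>i j. \<rho> $ i $ j = cnj (\<rho> $ j $ i)"
    and psd: "\<forall>v. Im (braket v (\<rho> *v v)) = 0 \<and> Re (braket v (\<rho> *v v)) \<ge> 0"
  shows "(cmod (braket v (\<rho> *v w)))^2 \<le> expect \<rho> v * expect \<rho> w"
proof -
  define c where "c = braket v (\<rho> *v w)"
  define y where "y = expect \<rho> v"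
  define a where "a = expect \<rho> w"
  define n where "n = (cmod c)^2"
  have im: "\<forall>v. Im (braket v (\<rho> *v v)) = 0" using psd by blast
  have key: "0 \<le> y - 2 * t * n + t^2 * n * a" for t :: real
  proof -
    define d where "d = complex_of_real t * cnj c"
    have "0 \<le> Re (braket (v - d *s w) (\<rho> *v (v - d *s w)))" using psd by blast
    also have "braket (v - d *s w) (\<rho> *v (v - d *s w)) =
        of_real y - d * c - cnj d * cnj c + cnj d * d * of_real a"
      unfolding B_expand y_def a_def c_def
      using herm_sym[OF herm, of w v] real_B[OF im] by simp
    also have "Re \<dots> = y - 2 * t * n + t^2 * n * a"
      unfolding n_def cmod_power2 by (simp add: d_def power2_eq_square algebra_simps)
    finally show ?thesis .
  qed
  have y0: "y \<ge> 0" and a0: "a \<ge> 0" using psd by (auto simp: y_def a_def expect_def)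
  have "n \<le> y * a"
  proof (cases "a = 0")
    case True
    show ?thesis
    proof (rule ccontr)
      assume "\<not> n \<le> y * a"
      then have np: "n > 0" using True by simp
      have "0 \<le> y - 2 * ((y + 1) / (2 * n)) * n" using key[of "(y+1)/(2*n)"] True by simp
      also have "\<dots> = -1" using np by (simp add: field_simps)
      finally show False by simp
    qed
  next
    case False
    then have ap: "a > 0" using a0 by simp
    have "0 \<le> y - 2 * (1/a) * n + (1/a)^2 * n * a" by (rule key)
    also have "\<dots> = (y * a - n) / a" using ap by (simp add: field_simps power2_eq_square)
    finally show ?thesis using ap by (simp add: divide_nonneg_pos zero_le_divide_iff)
  qed
  then show ?thesis by (simp add: n_def c_def y_def a_def)
qed

lemma le_norm:
  fixes \<rho> :: "complex^'n^'n"
  assumes "density_matrix \<rho>"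
  shows "expect \<rho> v \<le> (norm v)^2"
proof (cases "v = 0")
  case True then show ?thesis by (simp add: expect_def)
next
  case False
  define u where "u = complex_of_real (1 / norm v) *s v"
  have psd: "\<forall>v. Re (braket v (\<rho> *v v)) \<ge> 0" and tr: "trace \<rho> = 1"
    using assms by (auto simp: density_matrix_def)
  have "braket u u = cnj (complex_of_real (1 / norm v)) * complex_of_real (1 / norm v) * braket v v"
    by (simp add: u_def braket_scale_left braket_scale_right)
  also have "\<dots> = 1" unfolding braket_self[of v] using False
    by (simp add: power2_eq_square field_simps flip: of_real_mult)
  finally have "braket u u = 1" .
  then have "(\<Sum>i\<in>{0::nat}. Re (braket ((\<lambda>_. u) i) (\<rho> *v (\<lambda>_. u) i))) \<le> Re (trace \<rho>)"
    by (intro orthonormal_bound psd) auto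
  then have "expect \<rho> u \<le> 1" using tr by (simp add: expect_def)
  then have "(1 / norm v)^2 * expect \<rho> v \<le> 1" unfolding u_def expect_scale .
  then show ?thesis using False by (simp add: field_simps power2_eq_square)
qed

lemma normalize_unit:
  assumes "w \<noteq> 0"
  shows "braket (complex_of_real (1 / norm w) *s w) (complex_of_real (1 / norm w) *s w) = 1"
proof -
  have "braket (complex_of_real (1 / norm w) *s w) (complex_of_real (1 / norm w) *s w)
     = cnj (complex_of_real (1 / norm w)) * complex_of_real (1 / norm w) * braket w w"
    by (simp add: braket_scale_left braket_scale_right)
  also have "\<dots> = 1" unfolding braket_self[of w] using assms
    by (simp add: power2_eq_square field_simps flip: of_real_mult)
  finally show ?thesis .
qed

lemma step_bound:
  fixes \<rho> :: "complex^'n^'n"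
  assumes dm: "density_matrix \<rho>" and unit: "braket \<psi> \<psi> = 1"
    and orth: "braket p (\<psi> - p) = 0" and wnz: "\<psi> - p \<noteq> 0"
  shows "\<bar>expect \<rho> \<psi> - expect \<rho> p\<bar> \<le> 2 * sqrt (expect \<rho> (complex_of_real (1 / norm (\<psi> - p)) *s (\<psi> - p)))"
proof -
  define w where "w = \<psi> - p"
  define q where "q = norm w"
  define np where "np = norm p"
  define a where "a = expect \<rho> w"
  define y where "y = expect \<rho> p"
  define x where "x = expect \<rho> \<psi>"
  define \<alpha> where "\<alpha> = expect \<rho> (complex_of_real (1 / q) *s w)"
  have herm: "\<forall>i j. \<rho> $ i $ j = cnj (\<rho> $ j $ i)"
    and psd: "\<forall>v. Im (braket v (\<rho> *v v)) = 0 \<and> Re (braket v (\<rho> *v v)) \<ge> 0"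
    using dm unfolding density_matrix_def by blast+
  have q0: "q > 0" using wnz by (simp add: q_def w_def)
  have \<alpha>a: "\<alpha> = (1/q)^2 * a" unfolding \<alpha>_def a_def expect_scale ..
  have a_le: "a \<le> q^2" using le_norm[OF dm] by (simp add: a_def q_def)
  have a0: "a \<ge> 0" and y0: "y \<ge> 0" using psd by (auto simp: a_def y_def expect_def)
  have y_le: "y \<le> np^2" using le_norm[OF dm] by (simp add: y_def np_def)
  have aq: "a = q^2 * \<alpha>" using \<alpha>a q0 by (simp add: field_simps)
  have \<alpha>0: "\<alpha> \<ge> 0" using \<alpha>a a0 by simp
  have \<alpha>1: "\<alpha> \<le> 1"
  proof -
    have "q^2 * \<alpha> \<le> q^2 * 1" using aq a_le by simp
    then show ?thesis using q0 by (simp add: mult_le_cancel_left_pos)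
  qed
  have pw: "\<psi> = p + w" unfolding w_def by simp
  have norms: "np^2 + q^2 = 1"
  proof -
    have o1: "braket p w = 0" using orth unfolding w_def .
    have "braket w p = 0" using o1 braket_cnj[of p w] by simp
    then have "braket (p + w) (p + w) = braket p p + braket w w"
      using o1 by (simp add: braket_add_left braket_add_right)
    then have "braket \<psi> \<psi> = braket p p + braket w w" by (simp only: pw[symmetric])
    then have "1 = braket p p + braket w w" using unit by argo
    then have "complex_of_real 1 = complex_of_real (np^2 + q^2)"
      unfolding braket_self np_def q_def of_real_add of_real_1 .
    then show ?thesis by (simp only: of_real_eq_iff)
  qed
  define c where "c = braket p (\<rho> *v w)"
  have xy: "x = y + a + 2 * Re c"
  proof -
    have "braket w (\<rho> *v p) = cnj c" using herm_sym[OF herm, of w p] by (simp add: c_def)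
    then show ?thesis unfolding x_def pw expect_def B_add
      by (simp add: c_def y_def a_def expect_def)
  qed
  have "(cmod c)^2 \<le> y * a" using CS[OF herm psd, of p w] by (simp add: c_def y_def a_def)
  then have cm: "cmod c \<le> sqrt (y * a)" using real_le_rsqrt by blast
  have "\<bar>Re c\<bar> \<le> cmod c" by (rule abs_Re_le_cmod)
  define s where "s = sqrt \<alpha>"
  have s0: "s \<ge> 0" and ss: "s^2 = \<alpha>" using \<alpha>0 by (auto simp: s_def)
  have s1: "s \<le> 1" using \<alpha>1 by (simp add: s_def)
  have "sqrt (y * a) \<le> sqrt (np^2 * (q^2 * \<alpha>))"
    using mult_right_mono[OF y_le a0] aq by (intro real_sqrt_le_mono) simp
  also have "\<dots> = np * q * s" using q0 by (simp add: s_def real_sqrt_mult np_def)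
  finally have sy: "sqrt (y * a) \<le> np * q * s" .
  have np0: "np \<ge> 0" by (simp add: np_def)
  have "\<bar>x - y\<bar> \<le> a + 2 * (np * q * s)"
    using xy cm sy \<open>\<bar>Re c\<bar> \<le> cmod c\<close> a0 by linarith
  also have "a \<le> q^2 * s" using aq ss s0 s1 q0
    by (metis mult_left_mono power2_eq_square mult_left_le_one_le zero_le_power2 mult.commute)
  also have "q^2 * s + 2 * (np * q * s) = s * (q^2 + 2 * np * q)" by (simp add: algebra_simps)
  also have "\<dots> \<le> s * 2"
  proof (rule mult_left_mono[OF _ s0])
    have "2 * np * q \<le> np^2 + q^2" using sum_squares_bound[of np q] by (simp add: power2_eq_square)
    then show "q^2 + 2 * np * q \<le> 2" using norms by (smt (verit) zero_le_power2)
  qed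
  finally show ?thesis by (simp add: x_def y_def s_def \<alpha>_def w_def q_def mult.commute)
qed

theorem mainTheorem15:
  fixes \<rho> :: "complex^'n^'n" and \<epsilon> :: real
    and \<psi> :: "nat \<Rightarrow> complex^'n"
    and ohat :: "nat \<Rightarrow> real"
    and mistake :: "nat \<Rightarrow> bool"
    and N :: nat
  assumes "density_matrix \<rho>" and "\<epsilon> > 0"
    and "\<And>t. unit_vec (\<psi> t)"
    and "\<And>t. \<bar>expect \<rho> (oproj (\<psi> ` {j. j < t \<and> mistake j}) (\<psi> t)) - ohat t\<bar> < 3/8 * \<epsilon>"
    and "\<And>t. mistake t \<Longrightarrow> \<bar>expect \<rho> (\<psi> t) - ohat t\<bar> \<ge> 3/4 * \<epsilon>"
  shows "real (card {t. t < N \<and> mistake t}) \<le> 256/9 * (1 / \<epsilon>^2)"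
proof -
  note dm = assms(1) and ep = assms(2) and unit = assms(3) and orc = assms(4) and mis = assms(5)
  define S where "S t = \<psi> ` {j. j < t \<and> mistake j}" for t
  define p where "p t = oproj (S t) (\<psi> t)" for t
  define w where "w t = \<psi> t - p t" for t
  define u where "u t = complex_of_real (1 / norm (w t)) *s w t" for t
  define I where "I = {t. t < N \<and> mistake t}"
  have psd: "\<forall>v. Re (braket v (\<rho> *v v)) \<ge> 0" and tr: "trace \<rho> = 1"
    using dm unfolding density_matrix_def by blast+
  have pspan: "p t \<in> vec.span (S t)" and port: "\<And>s. s \<in> vec.span (S t) \<Longrightarrow> braket s (w t) = 0" for t
    using oproj_props[of "S t" "\<psi> t"] by (auto simp: p_def w_def)
  have big: "w t \<noteq> 0 \<and> 9/256 * \<epsilon>^2 < expect \<rho> (u t)" if "mistake t" for t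
  proof -
    have d1: "\<bar>expect \<rho> (p t) - ohat t\<bar> < 3/8 * \<epsilon>" using orc[of t] by (simp add: p_def S_def)
    have d2: "\<bar>expect \<rho> (\<psi> t) - ohat t\<bar> \<ge> 3/4 * \<epsilon>" using mis that .
    have d: "3/8 * \<epsilon> < \<bar>expect \<rho> (\<psi> t) - expect \<rho> (p t)\<bar>" using d1 d2 by linarith
    have wnz: "w t \<noteq> 0"
    proof
      assume "w t = 0"
      then have "\<psi> t = p t" by (simp add: w_def)
      then show False using d ep by simp
    qed
    have o: "braket (p t) (\<psi> t - p t) = 0" using port[OF pspan[of t]] by (simp add: w_def)
    have ub: "braket (\<psi> t) (\<psi> t) = 1" using unit[of t] by (simp add: unit_vec_def)
    have "\<bar>expect \<rho> (\<psi> t) - expect \<rho> (p t)\<bar> \<le> 2 * sqrt (expect \<rho> (u t))"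
      using step_bound[OF dm ub o] wnz by (simp add: u_def w_def)
    with d have "3/16 * \<epsilon> < sqrt (expect \<rho> (u t))" by linarith
    then have "(3/16 * \<epsilon>)^2 < (sqrt (expect \<rho> (u t)))^2"
      using ep by (intro power_strict_mono) auto
    also have "\<dots> = expect \<rho> (u t)"
      using psd by (simp add: expect_def)
    finally show ?thesis using wnz by (simp add: power2_eq_square)
  qed
  have orth: "braket (u i) (u j) = (if i = j then 1 else 0)" if "i \<in> I" "j \<in> I" for i j
  proof -
    have lt: "braket (u i) (u j) = 0" if "mistake i" "mistake j" "i < j" for i j
    proof -
      have sub: "S i \<subseteq> S j" using that by (auto simp: S_def)
      have "\<psi> i \<in> S j" using that by (auto simp: S_def)
      then have "\<psi> i \<in> vec.span (S j)" by (rule vec.span_base)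
      moreover have "p i \<in> vec.span (S j)" using vec.span_mono[OF sub] pspan[of i] by blast
      ultimately have "w i \<in> vec.span (S j)" unfolding w_def by (rule vec.span_diff)
      then have "braket (w i) (w j) = 0" by (rule port)
      then show ?thesis by (simp add: u_def braket_scale_left braket_scale_right)
    qed
    have mi: "mistake i" "mistake j" using that by (auto simp: I_def)
    show ?thesis
    proof (cases i j rule: linorder_cases)
      case less then show ?thesis using lt mi by simp
    next
      case equal then show ?thesis using big[OF mi(1)] normalize_unit[of "w i"] unfolding u_def by simp
    next
      case greater
      then have "braket (u j) (u i) = 0" using lt mi by simp
      then show ?thesis using greater braket_cnj[of "u j" "u i"] by simp
    qed
  qed
  have fin: "finite I" by (simp add: I_def)
  have "(\<Sum>i\<in>I. Re (braket (u i) (\<rho> *v u i))) \<le> Re (trace \<rho>)"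
    by (rule orthonormal_bound[OF psd fin orth])
  then have sum1: "(\<Sum>i\<in>I. expect \<rho> (u i)) \<le> 1" using tr by (simp add: expect_def)
  have "(\<Sum>i\<in>I. 9/256 * \<epsilon>^2) \<le> (\<Sum>i\<in>I. expect \<rho> (u i))"
    using big by (intro sum_mono) (auto simp: I_def less_imp_le)
  with sum1 have "real (card I) * (9/256 * \<epsilon>^2) \<le> 1" by simp
  then have "real (card I) \<le> 1 / (9/256 * \<epsilon>^2)"
    using ep by (simp add: field_simps)
  then show ?thesis by (simp add: I_def field_simps)
qed

end
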